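(* Let $\Omega\subset\mathbb{R}^n$ be a bounded domain, $T>0$, $\mathscr D:=\Omega\times(0,T)$, $\mathscr U\subset\mathscr D$ open, and let $e:\mathscr D\times\mathbb{R}\to\mathbb{R}$, $(x,t,r)\mapsto e(x,t)[r]$, be affine in $r$ with $e(x,t)[\pm1]>0$ for $(x,t)\in\mathscr U$. If $e$ is continuous and bounded on $\mathscr U\times[-1,1]$, then the map $(x,t)\mapsto\pi(K_{(x,t)})$ is continuous and bounded on $\mathscr U$ with respect to the Hausdorff metric.
   Context: $n\ge2$; $\mathcal S_0^{n\times n}$ the trace-free symmetric matrices; $Z:=\mathbb{R}\times\mathbb{R}^n\times\mathbb{R}^n\times\mathcal S_0^{n\times n}\times\mathbb{R}$ with elements $z=(\rho,v,m,\sigma,p)$; $\pi(z):=(\rho,v,m,\sigma)$; $K_{(x,t)}:=\{z\in Z:\rho\in\{\pm1\},m=\rho v,v\otimes v-\sigma=e(x,t)[\rho]\mathrm{Id}\}$. *)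

theory Defs
  imports "HOL-Analysis.Analysis"
begin

text \<open>Hausdorff distance between (nonempty, bounded) subsets of a metric space.\<close>
definition hausdorff_dist :: "'a::metric_space set \<Rightarrow> 'a set \<Rightarrow> real" where
  "hausdorff_dist A B = max (SUP a\<in>A. infdist a B) (SUP b\<in>B. infdist b A)"

definition symTF :: "(real^'n^'n) set" where
  "symTF = {\<sigma>. transpose \<sigma> = \<sigma> \<and> trace \<sigma> = 0}"

definition tensor :: "real^'n \<Rightarrow> real^'n \<Rightarrow> real^'n^'n" where
  "tensor v w = (\<chi> i j. v $ i * w $ j)"

definition Zspace :: "(real \<times> (real^'n) \<times> (real^'n) \<times> (real^'n^'n) \<times> real) set" where
  "Zspace = {(\<rho>, v, m, \<sigma>, p). \<sigma> \<in> symTF}"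

definition piZ :: "real \<times> (real^'n) \<times> (real^'n) \<times> (real^'n^'n) \<times> real \<Rightarrow> real \<times> (real^'n) \<times> (real^'n) \<times> (real^'n^'n)" where
  "piZ z = (case z of (\<rho>, v, m, \<sigma>, p) \<Rightarrow> (\<rho>, v, m, \<sigma>))"

definition Kset :: "((real^'n) \<times> real \<Rightarrow> real \<Rightarrow> real) \<Rightarrow> (real^'n) \<times> real
      \<Rightarrow> (real \<times> (real^'n) \<times> (real^'n) \<times> (real^'n^'n) \<times> real) set" where
  "Kset e y = {z \<in> Zspace. case z of (\<rho>, v, m, \<sigma>, p) \<Rightarrow>
       \<rho> \<in> {1, -1} \<and> m = \<rho> *\<^sub>R v \<and> tensor v v - \<sigma> = e y \<rho> *\<^sub>R mat 1}"

end

theory Submission imports Defs begin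

definition Fm :: "real \<Rightarrow> real \<Rightarrow> real^'n \<Rightarrow> real \<times> (real^'n) \<times> (real^'n) \<times> (real^'n^'n)" where
  "Fm \<rho> c v = (\<rho>, v, \<rho> *\<^sub>R v, tensor v v - c *\<^sub>R mat 1)"

definition Gm :: "real \<Rightarrow> real \<Rightarrow> real^'n \<Rightarrow> real \<times> (real^'n) \<times> (real^'n) \<times> (real^'n^'n)" where
  "Gm \<rho> c u = Fm \<rho> c (sqrt (real CARD('n) * c) *\<^sub>R u)"

lemma trace_scaleR: "trace (c *\<^sub>R (A::real^'n^'n)) = c * trace A"
  by (simp add: trace_def sum_distrib_left)

lemma trace_tensor: "trace (tensor v v) = v \<bullet> v"
  by (simp add: trace_def tensor_def inner_vec_def)

lemma transpose_tensor: "transpose (tensor v v) = tensor v v"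
  by (simp add: transpose_def tensor_def vec_eq_iff mult.commute)

lemma tensor_scale: "tensor (k *\<^sub>R v) (k *\<^sub>R v) = (k^2) *\<^sub>R tensor v v"
  by (simp add: tensor_def vec_eq_iff power2_eq_square)

lemma transpose_diff': "transpose (A - (B::real^'n^'n)) = transpose A - transpose B"
  by (simp add: transpose_def vec_eq_iff)

lemma Gm_eq: fixes u :: "real^'n" assumes "c \<ge> 0"
  shows "Gm \<rho> c u = (\<rho>, sqrt (real CARD('n) * c) *\<^sub>R u, (\<rho> * sqrt (real CARD('n) * c)) *\<^sub>R u,
     c *\<^sub>R (real CARD('n) *\<^sub>R tensor u u - mat 1))"
  using assms by (simp add: Gm_def Fm_def tensor_scale algebra_simps)

lemma cont_tensor: "continuous_on S (\<lambda>u::real^'n. tensor u u)"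
  unfolding tensor_def by (intro continuous_intros)

lemma cont_tensor2[continuous_intros]: "continuous_on S f \<Longrightarrow> continuous_on S (\<lambda>x. tensor (f x) (f x :: real^'n))"
  unfolding tensor_def by (intro continuous_intros)

lemma norm4: "norm (a, b, c, d) \<le> norm a + (norm b + (norm c + norm d))"
  using norm_Pair_le[of a "(b,c,d)"] norm_Pair_le[of b "(c,d)"] norm_Pair_le[of c d] by linarith

lemma Hbound: "\<exists>M\<ge>0. \<forall>u::real^'n. norm u = 1 \<longrightarrow> norm (real CARD('n) *\<^sub>R tensor u u - mat 1) \<le> M"
proof -
  have cpt: "compact ((\<lambda>u::real^'n. real CARD('n) *\<^sub>R tensor u u - mat 1) ` sphere 0 1)"
    by (intro compact_continuous_image continuous_intros cont_tensor compact_sphere)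
  obtain M where "\<forall>x\<in>(\<lambda>u::real^'n. real CARD('n) *\<^sub>R tensor u u - mat 1) ` sphere 0 1. norm x \<le> M"
    using compact_imp_bounded[OF cpt] unfolding bounded_iff by blast
  then have "\<forall>u::real^'n. norm u = 1 \<longrightarrow> norm (real CARD('n) *\<^sub>R tensor u u - mat 1) \<le> max M 0"
    by force
  then show ?thesis by (intro exI[of _ "max M 0"]) simp
qed

lemma Gm_dist: assumes "c \<ge> 0" "c' \<ge> 0" "\<rho> \<in> {1,-1}" "norm u = 1"
   "norm (real CARD('n) *\<^sub>R tensor u u - mat 1) \<le> M"
  shows "dist (Gm \<rho> c (u::real^'n)) (Gm \<rho> c' u) \<le>
     2 * \<bar>sqrt (real CARD('n) * c) - sqrt (real CARD('n) * c')\<bar> + \<bar>c - c'\<bar> * M"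
proof -
  define k where "k = sqrt (real CARD('n) * c)"
  define k' where "k' = sqrt (real CARD('n) * c')"
  define H where "H = real CARD('n) *\<^sub>R tensor u u - (mat 1 :: real^'n^'n)"
  have "dist (Gm \<rho> c u) (Gm \<rho> c' u) = norm (Gm \<rho> c u - Gm \<rho> c' u)"
    by (simp add: dist_norm)
  also have "Gm \<rho> c u - Gm \<rho> c' u = (0, (k - k') *\<^sub>R u, (\<rho> * (k - k')) *\<^sub>R u, (c - c') *\<^sub>R H)"
    unfolding Gm_eq[OF assms(1)] Gm_eq[OF assms(2)] by (simp add: k_def k'_def H_def algebra_simps)
  also have "norm \<dots> \<le> norm (0::real) + (norm ((k - k') *\<^sub>R u) + (norm ((\<rho> * (k - k')) *\<^sub>R u) + norm ((c - c') *\<^sub>R H)))"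
    by (rule norm4)
  also have "\<dots> \<le> 2 * \<bar>k - k'\<bar> + \<bar>c - c'\<bar> * M"
  proof -
    have "norm ((c - c') *\<^sub>R H) \<le> \<bar>c - c'\<bar> * M"
      using assms(5) by (simp add: H_def mult_left_mono)
    moreover have "\<bar>\<rho>\<bar> = 1" using assms(3) by auto
    ultimately show ?thesis using assms(4) by (simp add: abs_mult)
  qed
  finally show ?thesis by (simp add: k_def k'_def)
qed


lemma Kchar:
  fixes e :: "(real^'n) \<times> real \<Rightarrow> real \<Rightarrow> real"
  assumes "e y 1 > 0" "e y (-1) > 0"
  shows "piZ ` Kset e y = {Gm \<rho> (e y \<rho>) (u::real^'n) | \<rho> u. \<rho> \<in> {1,-1} \<and> norm u = 1}"
proof
  show "piZ ` Kset e y \<subseteq> {Gm \<rho> (e y \<rho>) (u::real^'n) | \<rho> u. \<rho> \<in> {1,-1} \<and> norm u = 1}"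
  proof
    fix w assume "w \<in> piZ ` Kset e y"
    then obtain \<rho> v m \<sigma> p where z: "(\<rho>, v, m, \<sigma>, p) \<in> Kset e y" and w: "w = piZ (\<rho>, v, m, \<sigma>, p)"
      by (metis imageE prod_cases5)
    have r: "\<rho> \<in> {1,-1}" and m: "m = \<rho> *\<^sub>R v" and s: "tensor v v - \<sigma> = e y \<rho> *\<^sub>R mat 1"
      and st: "\<sigma> \<in> symTF"
      using z by (auto simp: Kset_def Zspace_def)
    define c where "c = e y \<rho>"
    have c: "c > 0" using r assms by (auto simp: c_def)
    have \<sigma>: "\<sigma> = tensor v v - c *\<^sub>R mat 1" using s by (simp add: c_def algebra_simps)
    have "trace \<sigma> = 0" using st by (simp add: symTF_def)
    then have vv: "v \<bullet> v = real CARD('n) * c"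
      by (simp add: \<sigma> trace_sub trace_scaleR trace_tensor trace_I)
    define k where "k = sqrt (real CARD('n) * c)"
    have k: "k > 0" using c by (simp add: k_def)
    have nv: "norm v = k" by (simp add: k_def norm_eq_sqrt_inner vv)
    define u where "u = (1/k) *\<^sub>R v"
    have nu: "norm u = 1" using k nv by (simp add: u_def)
    have vu: "v = k *\<^sub>R u" using k by (simp add: u_def)
    have "w = Gm \<rho> c u"
      using w by (simp add: piZ_def Gm_def Fm_def m \<sigma> vu[symmetric] k_def[symmetric])
    then show "w \<in> {Gm \<rho> (e y \<rho>) (u::real^'n) | \<rho> u. \<rho> \<in> {1,-1} \<and> norm u = 1}"
      using r nu c_def by blast
  qed
next
  show "{Gm \<rho> (e y \<rho>) (u::real^'n) | \<rho> u. \<rho> \<in> {1,-1} \<and> norm u = 1} \<subseteq> piZ ` Kset e y"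
  proof
    fix w assume "w \<in> {Gm \<rho> (e y \<rho>) (u::real^'n) | \<rho> u. \<rho> \<in> {1,-1} \<and> norm u = 1}"
    then obtain \<rho> u where r: "\<rho> \<in> {1,-1}" and nu: "norm (u::real^'n) = 1" and w: "w = Gm \<rho> (e y \<rho>) u"
      by blast
    define c where "c = e y \<rho>"
    have c: "c > 0" using r assms by (auto simp: c_def)
    define k where "k = sqrt (real CARD('n) * c)"
    define v where "v = k *\<^sub>R u"
    have "v \<bullet> v = k^2 * (u \<bullet> u)" by (simp add: v_def power2_eq_square)
    also have "u \<bullet> u = 1" using nu by (simp add: dot_square_norm)
    finally have vv: "v \<bullet> v = real CARD('n) * c" using c by (simp add: k_def)
    define \<sigma> where "\<sigma> = tensor v v - c *\<^sub>R mat 1"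
    have st: "\<sigma> \<in> symTF"
      by (simp add: symTF_def \<sigma>_def transpose_diff' transpose_tensor transpose_scalar
            trace_sub trace_scaleR trace_tensor trace_I vv)
    have "(\<rho>, v, \<rho> *\<^sub>R v, \<sigma>, 0) \<in> Kset e y"
      using r st by (auto simp: Kset_def Zspace_def \<sigma>_def c_def)
    moreover have "w = piZ (\<rho>, v, \<rho> *\<^sub>R v, \<sigma>, 0)"
      by (simp add: w piZ_def Gm_def Fm_def v_def k_def c_def \<sigma>_def)
    ultimately show "w \<in> piZ ` Kset e y" by blast
  qed
qed

lemma hd_le:
  assumes "A \<noteq> {}" "B \<noteq> {}" "\<forall>a\<in>A. \<exists>b\<in>B. dist a b \<le> d" "\<forall>b\<in>B. \<exists>a\<in>A. dist b a \<le> d"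
  shows "hausdorff_dist A B \<le> d"
proof -
  have "(SUP a\<in>A. infdist a B) \<le> d"
  proof (rule cSUP_least[OF assms(1)])
    fix a assume "a \<in> A"
    then obtain b where "b \<in> B" "dist a b \<le> d" using assms(3) by blast
    then show "infdist a B \<le> d" using infdist_le[of b B a] by linarith
  qed
  moreover have "(SUP b\<in>B. infdist b A) \<le> d"
  proof (rule cSUP_least[OF assms(2)])
    fix b assume "b \<in> B"
    then obtain a where "a \<in> A" "dist b a \<le> d" using assms(4) by blast
    then show "infdist b A \<le> d" using infdist_le[of a A b] by linarith
  qed
  ultimately show ?thesis by (simp add: hausdorff_dist_def)
qed

theorem lemma3p12:
  fixes \<Omega> :: "(real^'n) set" and T :: real and U :: "((real^'n) \<times> real) set"
    and e :: "(real^'n) \<times> real \<Rightarrow> real \<Rightarrow> real"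
  assumes n2: "CARD('n) \<ge> 2"
    and dom: "open \<Omega>" "connected \<Omega>" "\<Omega> \<noteq> {}" "bounded \<Omega>"
    and T: "T > 0"
    and U: "open U" "U \<subseteq> \<Omega> \<times> {0<..<T}"
    and affine: "\<forall>y\<in>\<Omega> \<times> {0<..<T}. \<exists>a b. \<forall>r. e y r = a + b * r"
    and pos: "\<forall>y\<in>U. e y 1 > 0 \<and> e y (-1) > 0"
    and cont: "continuous_on (U \<times> {-1..1}) (\<lambda>(y, r). e y r)"
    and bdd: "bounded ((\<lambda>(y, r). e y r) ` (U \<times> {-1..1}))"
  shows "(\<forall>y\<in>U. compact (piZ ` Kset e y) \<and> piZ ` Kset e y \<noteq> {})
    \<and> (\<forall>y\<in>U. \<forall>\<epsilon>>0. \<exists>\<delta>>0. \<forall>y'\<in>U. dist y' y < \<delta> \<longrightarrow>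
           hausdorff_dist (piZ ` Kset e y') (piZ ` Kset e y) < \<epsilon>)
    \<and> (\<exists>C. \<forall>y\<in>U. \<forall>y'\<in>U. hausdorff_dist (piZ ` Kset e y) (piZ ` Kset e y') \<le> C)"
proof -
  let ?n = "real CARD('n)"
  obtain M where M0: "M \<ge> 0" and M: "\<forall>u::real^'n. norm u = 1 \<longrightarrow> norm (?n *\<^sub>R tensor u u - mat 1) \<le> M"
    using Hbound by blast
  define S where "S y = {Gm \<rho> (e y \<rho>) (u::real^'n) | \<rho> u. \<rho> \<in> {1,-1} \<and> norm u = 1}" for y
  have SK: "piZ ` Kset e y = S y" if "y \<in> U" for y
    using Kchar[of e y] pos that unfolding S_def by blast
  define D where "D \<rho> y' y = 2 * \<bar>sqrt (?n * e y' \<rho>) - sqrt (?n * e y \<rho>)\<bar> + \<bar>e y' \<rho> - e y \<rho>\<bar> * M" for \<rho> y' y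
  obtain u0 :: "real^'n" where u0: "norm u0 = 1" using vector_choose_size[of 1] by auto
  have Sne: "S y \<noteq> {}" for y
    using u0 unfolding S_def by blast
  have epos: "e y \<rho> > 0" if "y \<in> U" "\<rho> \<in> {1,-1}" for y \<rho>
    using pos that by auto
  have HD: "hausdorff_dist (S y') (S y) \<le> max (D 1 y' y) (D (-1) y' y)" if y: "y \<in> U" "y' \<in> U" for y y'
  proof (rule hd_le[OF Sne Sne])
    have key: "dist (Gm \<rho> (e y' \<rho>) u) (Gm \<rho> (e y \<rho>) u) \<le> max (D 1 y' y) (D (-1) y' y)"
      if "\<rho> \<in> {1,-1}" "norm (u::real^'n) = 1" for \<rho> u
    proof -
      have "dist (Gm \<rho> (e y' \<rho>) u) (Gm \<rho> (e y \<rho>) u) \<le> D \<rho> y' y"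
      proof -
        have g: "0 \<le> e y' \<rho>" "0 \<le> e y \<rho>"
          using epos[OF y(2) that(1)] epos[OF y(1) that(1)] by auto
        show ?thesis unfolding D_def using Gm_dist[OF g that(1) that(2)] M that(2) by blast
      qed
      also have "\<dots> \<le> max (D 1 y' y) (D (-1) y' y)" using that(1) by auto
      finally show ?thesis .
    qed
    show "\<forall>a\<in>S y'. \<exists>b\<in>S y. dist a b \<le> max (D 1 y' y) (D (-1) y' y)"
    proof
      fix a assume "a \<in> S y'"
      then obtain \<rho> u where r: "\<rho> \<in> {1,-1}" "norm (u::real^'n) = 1" and a: "a = Gm \<rho> (e y' \<rho>) u"
        unfolding S_def by blast
      have "Gm \<rho> (e y \<rho>) u \<in> S y" unfolding S_def using r by blast
      then show "\<exists>b\<in>S y. dist a b \<le> max (D 1 y' y) (D (-1) y' y)"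
        using key[OF r] a by blast
    qed
    show "\<forall>b\<in>S y. \<exists>a\<in>S y'. dist b a \<le> max (D 1 y' y) (D (-1) y' y)"
    proof
      fix b assume "b \<in> S y"
      then obtain \<rho> u where r: "\<rho> \<in> {1,-1}" "norm (u::real^'n) = 1" and b: "b = Gm \<rho> (e y \<rho>) u"
        unfolding S_def by blast
      have "Gm \<rho> (e y' \<rho>) u \<in> S y'" unfolding S_def using r by blast
      moreover have "dist b (Gm \<rho> (e y' \<rho>) u) \<le> max (D 1 y' y) (D (-1) y' y)"
        using key[OF r] b by (simp add: dist_commute)
      ultimately show "\<exists>a\<in>S y'. dist b a \<le> max (D 1 y' y) (D (-1) y' y)"
        by blast
    qed
  qed
  have C1: "\<forall>y\<in>U. compact (piZ ` Kset e y) \<and> piZ ` Kset e y \<noteq> {}"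
  proof
    fix y assume y: "y \<in> U"
    have "S y = Gm 1 (e y 1) ` sphere 0 1 \<union> Gm (-1) (e y (-1)) ` sphere 0 1"
    proof
      show "S y \<subseteq> Gm 1 (e y 1) ` sphere 0 1 \<union> Gm (-1) (e y (-1)) ` sphere 0 1"
        unfolding S_def by auto
      have "Gm \<rho> (e y \<rho>) ` sphere (0::real^'n) 1 \<subseteq> S y" if "\<rho> \<in> {1,-1}" for \<rho>
      proof
        fix w assume "w \<in> Gm \<rho> (e y \<rho>) ` sphere (0::real^'n) 1"
        then obtain u where "norm (u::real^'n) = 1" "w = Gm \<rho> (e y \<rho>) u" by auto
        then show "w \<in> S y" unfolding S_def using that by blast
      qed
      then show "Gm 1 (e y 1) ` sphere 0 1 \<union> Gm (-1) (e y (-1)) ` sphere 0 1 \<subseteq> S y"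
        by auto
    qed
    moreover have "compact (Gm \<rho> c ` sphere (0::real^'n) 1)" for \<rho> c
      unfolding Gm_def Fm_def
      by (intro compact_continuous_image compact_sphere continuous_intros cont_tensor)
    ultimately show "compact (piZ ` Kset e y) \<and> piZ ` Kset e y \<noteq> {}"
      using SK[OF y] Sne by (simp add: compact_Un)
  qed
  have econt: "continuous_on U (\<lambda>y. e y \<rho>)" if "\<rho> \<in> {1,-1}" for \<rho>
  proof -
    have "continuous_on U (\<lambda>y. (\<lambda>(y, r). e y r) (y, \<rho>))"
      by (rule continuous_on_compose2[OF cont]) (use that in \<open>auto intro: continuous_intros\<close>)
    then show ?thesis by simp
  qed
  have Dcont: "\<exists>d>0. \<forall>y'\<in>U. dist y' y < d \<longrightarrow> D \<rho> y' y < \<epsilon>"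
    if r: "\<rho> \<in> {1,-1}" and y: "y \<in> U" and eps: "\<epsilon> > 0" for \<rho> y \<epsilon>
  proof -
    have "continuous_on U (\<lambda>y'. D \<rho> y' y)"
      unfolding D_def by (intro continuous_intros econt r)
    then obtain d where d: "d > 0" "\<forall>y'\<in>U. dist y' y < d \<longrightarrow> dist (D \<rho> y' y) (D \<rho> y y) < \<epsilon>"
      using y eps unfolding continuous_on_iff by blast
    have D0: "D \<rho> y y = 0" using M0 by (simp add: D_def)
    have Dp: "D \<rho> y' y \<ge> 0" for y' using M0 by (simp add: D_def)
    show ?thesis
    proof (intro exI[of _ d] conjI ballI impI)
      fix y' assume "y' \<in> U" "dist y' y < d"
      then have "dist (D \<rho> y' y) 0 < \<epsilon>" using d D0 by simp
      then show "D \<rho> y' y < \<epsilon>" using Dp[of y'] by (simp add: dist_real_def)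
    qed (use d in simp)
  qed
  have C2: "\<forall>y\<in>U. \<forall>\<epsilon>>0. \<exists>\<delta>>0. \<forall>y'\<in>U. dist y' y < \<delta> \<longrightarrow>
           hausdorff_dist (piZ ` Kset e y') (piZ ` Kset e y) < \<epsilon>"
  proof (intro ballI allI impI)
    fix y \<epsilon> assume y: "y \<in> U" and e: "(\<epsilon>::real) > 0"
    obtain d1 where d1: "d1 > 0" "\<forall>y'\<in>U. dist y' y < d1 \<longrightarrow> D 1 y' y < \<epsilon>"
      using Dcont[of 1 y \<epsilon>] y e by auto
    obtain d2 where d2: "d2 > 0" "\<forall>y'\<in>U. dist y' y < d2 \<longrightarrow> D (-1) y' y < \<epsilon>"
      using Dcont[of "-1" y \<epsilon>] y e by auto
    show "\<exists>\<delta>>0. \<forall>y'\<in>U. dist y' y < \<delta> \<longrightarrow> hausdorff_dist (piZ ` Kset e y') (piZ ` Kset e y) < \<epsilon>"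
    proof (intro exI[of _ "min d1 d2"] conjI ballI impI)
      show "min d1 d2 > 0" using d1 d2 by simp
      fix y' assume y': "y' \<in> U" "dist y' y < min d1 d2"
      have "hausdorff_dist (S y') (S y) \<le> max (D 1 y' y) (D (-1) y' y)" using HD y y' by blast
      also have "\<dots> < \<epsilon>" using d1 d2 y' by auto
      finally show "hausdorff_dist (piZ ` Kset e y') (piZ ` Kset e y) < \<epsilon>"
        using SK y y'(1) by simp
    qed
  qed
  obtain B where B: "\<forall>x\<in>(\<lambda>(y, r). e y r) ` (U \<times> {-1..1}). norm x \<le> B"
    using bdd unfolding bounded_iff by blast
  have eB: "e y \<rho> \<le> B" if "y \<in> U" "\<rho> \<in> {1,-1}" for y \<rho>
  proof -
    have "(y, \<rho>) \<in> U \<times> {-1..1}" using that by auto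
    then have "norm (e y \<rho>) \<le> B" using B by force
    then show ?thesis by simp
  qed
  have Dle: "D \<rho> y' y \<le> 4 * sqrt (?n * B) + 2 * B * M" if "y \<in> U" "y' \<in> U" "\<rho> \<in> {1,-1}" for \<rho> y y'
  proof -
    have p: "e y \<rho> > 0" "e y' \<rho> > 0" using epos that by auto
    have b: "e y \<rho> \<le> B" "e y' \<rho> \<le> B" using eB that by auto
    have s1: "sqrt (?n * e y \<rho>) \<le> sqrt (?n * B)" "sqrt (?n * e y' \<rho>) \<le> sqrt (?n * B)"
      using b by (auto intro: mult_left_mono)
    have "\<bar>sqrt (?n * e y' \<rho>) - sqrt (?n * e y \<rho>)\<bar> \<le> 2 * sqrt (?n * B)"
      using s1 p by (smt (verit) real_sqrt_ge_zero zero_le_mult_iff of_nat_0_le_iff)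
    then have a1: "2 * \<bar>sqrt (?n * e y' \<rho>) - sqrt (?n * e y \<rho>)\<bar> \<le> 4 * sqrt (?n * B)"
      by (smt (verit))
    have a2: "\<bar>e y' \<rho> - e y \<rho>\<bar> * M \<le> 2 * B * M"
      using p b M0 by (intro mult_right_mono) auto
    show ?thesis unfolding D_def using add_mono[OF a1 a2] by simp
  qed
  have C3: "\<exists>C. \<forall>y\<in>U. \<forall>y'\<in>U. hausdorff_dist (piZ ` Kset e y) (piZ ` Kset e y') \<le> C"
  proof (intro exI[of _ "4 * sqrt (?n * B) + 2 * B * M"] ballI)
    fix y y' assume y: "y \<in> U" "y' \<in> U"
    have "hausdorff_dist (S y) (S y') \<le> max (D 1 y y') (D (-1) y y')" using HD y by blast
    also have "\<dots> \<le> 4 * sqrt (?n * B) + 2 * B * M" using Dle y by auto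
    finally show "hausdorff_dist (piZ ` Kset e y) (piZ ` Kset e y') \<le> 4 * sqrt (?n * B) + 2 * B * M"
      using SK y by simp
  qed
  show ?thesis using C1 C2 C3 by blast
qed

end
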